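(* Let $n\ge2$ and let $F:(0,\pi)\to(0,\infty)$ be strictly decreasing. Let $x_1,\dots,x_n$ be distinct points on the unit circle $S^1$, listed in counterclockwise cyclic order, and suppose every particle is in tangential equilibrium under the force law described in the context. Then the arc distance $d(x_i,x_{(i \bmod n)+1})$ between cyclically consecutive particles is the same for all $i=1,\dots,n$.
   Context: For $p,q\in S^1$ let $d(p,q)\in[0,\pi]$ be the geodesic (arc-length) distance. A particle at $q$ exerts on a particle at $p\ne q$ a force tangent to $S^1$ at $p$ of magnitude $F(d(p,q))$, directed away from $q$ along the shorter arc from $q$ to $p$, if $d(p,q)<\pi$; an antipodal particle ($d(p,q)=\pi$) exerts no tangential force. The particle at $x_i$ is in equilibrium if the sum of the (signed, tangential) forces exerted on it by all the other particles $x_j$, $j\ne i$, is zero, i.e. the total force from particles in the open counterclockwise half-circle from $x_i$ equals the total force from particles in the open clockwise half-circle from $x_i$. *)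

theory Defs
  imports Complex_Main
begin

text \<open>Points of the unit circle S^1 are represented by angles (real numbers,
  taken modulo 2 pi); the angle t stands for the point (cos t, sin t).\<close>

definition ccw_angle :: "real \<Rightarrow> real \<Rightarrow> real" where
  "ccw_angle a b = (b - a) - 2 * pi * of_int \<lfloor>(b - a) / (2 * pi)\<rfloor>"

definition arc_dist :: "real \<Rightarrow> real \<Rightarrow> real" where
  "arc_dist a b = min (ccw_angle a b) (2 * pi - ccw_angle a b)"

text \<open>Signed tangential force (positive = counterclockwise) exerted by a particle
  at q on a particle at p: magnitude F(d(p,q)), directed away from q along the
  shorter arc; zero if p and q are antipodal (or equal).\<close>
definition tforce :: "(real \<Rightarrow> real) \<Rightarrow> real \<Rightarrow> real \<Rightarrow> real" where
  "tforce F p q =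
     (if 0 < ccw_angle p q \<and> ccw_angle p q < pi then - F (arc_dist p q)
      else if pi < ccw_angle p q then F (arc_dist p q)
      else 0)"

definition in_equilibrium :: "(real \<Rightarrow> real) \<Rightarrow> nat \<Rightarrow> (nat \<Rightarrow> real) \<Rightarrow> nat \<Rightarrow> bool" where
  "in_equilibrium F n x i \<longleftrightarrow> (\<Sum>j\<in>{1..n} - {i}. tforce F (x i) (x j)) = 0"

end

theory Submission
  imports Defs
begin

lemma ccw_pos: "0 \<le> b - a \<Longrightarrow> b - a < 2*pi \<Longrightarrow> ccw_angle a b = b - a"
proof -
  assume h: "0 \<le> b - a" "b - a < 2*pi"
  have "\<lfloor>(b - a) / (2 * pi)\<rfloor> = 0"
    using h pi_gt_zero by (simp add: floor_eq_iff divide_simps)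
  thus ?thesis by (simp add: ccw_angle_def)
qed

lemma ccw_neg: "-2*pi \<le> b - a \<Longrightarrow> b - a < 0 \<Longrightarrow> ccw_angle a b = b - a + 2*pi"
proof -
  assume h: "-2*pi \<le> b - a" "b - a < 0"
  have "\<lfloor>(b - a) / (2 * pi)\<rfloor> = -1"
    using h pi_gt_zero by (simp add: floor_eq_iff divide_simps)
  thus ?thesis by (simp add: ccw_angle_def)
qed

definition phiF :: "(real \<Rightarrow> real) \<Rightarrow> real \<Rightarrow> real" where
  "phiF F t = (if t < pi then - F t else if pi < t then F (2*pi - t) else 0)"

lemma tforce_phi:
  assumes "0 < ccw_angle p q" "ccw_angle p q < 2*pi"
  shows "tforce F p q = phiF F (ccw_angle p q)"
  using assms by (auto simp: tforce_def phiF_def arc_dist_def min_def)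

lemma phi_mono:
  assumes F_pos: "\<forall>t. 0 < t \<and> t < pi \<longrightarrow> 0 < F t"
    and F_decr: "\<forall>s t. 0 < s \<and> s < t \<and> t < pi \<longrightarrow> F t < F s"
    and "0 < a" "a < b" "b < 2*pi"
  shows "phiF F a < phiF F b"
proof -
  consider "b < pi" | "b = pi" | "pi < b" by linarith
  thus ?thesis
  proof cases
    case 1 thus ?thesis using assms by (auto simp: phiF_def)
  next
    case 2 thus ?thesis using assms by (auto simp: phiF_def)
  next
    case 3
    show ?thesis
    proof (cases "pi < a")
      case True
      have "F (2*pi - a) < F (2*pi - b)" using F_decr True 3 assms by auto
      thus ?thesis using True 3 by (simp add: phiF_def)
    next
      case False
      have "0 < F (2*pi - b)" using F_pos 3 assms by auto
      moreover have "a < pi \<Longrightarrow> 0 < F a" using F_pos assms by auto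
      ultimately show ?thesis using False 3 by (auto simp: phiF_def)
    qed
  qed
qed

lemma mono_x:
  assumes h: "\<forall>i. 1 \<le> i \<and> i < n \<longrightarrow> x i < (x (i + 1) :: real)" and i1: "1 \<le> (i::nat)"
  shows "i + Suc k \<le> n \<Longrightarrow> x i < x (i + Suc k)"
proof (induction k)
  case 0
  have "1 \<le> i \<and> i < n" using 0 i1 by linarith
  hence "x i < x (i + 1)" using h by blast
  thus ?case by simp
next
  case (Suc k)
  have "i + Suc k \<le> n" using Suc.prems by linarith
  hence a: "x i < x (i + Suc k)" by (rule Suc.IH)
  have "1 \<le> i + Suc k \<and> i + Suc k < n" using Suc.prems by linarith
  hence "x (i + Suc k) < x (i + Suc k + 1)" using h by blast
  with a show ?case by simp
qed

lemma mono_x2: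
  assumes h: "\<forall>i. 1 \<le> i \<and> i < n \<longrightarrow> x i < (x (i + 1) :: real)" and "1 \<le> (i::nat)" "i < j" "j \<le> n"
  shows "x i < x j"
proof -
  define k where "k = j - i - 1"
  have k: "j = i + Suc k" using assms(3) unfolding k_def by simp
  have "x i < x (i + Suc k)" by (rule mono_x[OF h assms(2)]) (use k assms(4) in simp)
  thus ?thesis using k by simp
qed

theorem mainTheorem3:
  fixes n :: nat and F :: "real \<Rightarrow> real" and x :: "nat \<Rightarrow> real"
  assumes n2: "n \<ge> 2"
    and F_pos: "\<forall>t. 0 < t \<and> t < pi \<longrightarrow> 0 < F t"
    and F_decr: "\<forall>s t. 0 < s \<and> s < t \<and> t < pi \<longrightarrow> F t < F s"
    and ccw_order: "\<forall>i. 1 \<le> i \<and> i < n \<longrightarrow> x i < x (i + 1)"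
    and ccw_wrap: "x n < x 1 + 2 * pi"
    and equil: "\<forall>i\<in>{1..n}. in_equilibrium F n x i"
  shows "\<forall>i\<in>{1..n}. \<forall>k\<in>{1..n}.
           arc_dist (x i) (x (i mod n + 1)) = arc_dist (x k) (x (k mod n + 1))"
proof -
  have le: "x i \<le> x j" if "1 \<le> i" "i \<le> j" "j \<le> n" for i j
    using mono_x2[OF ccw_order, of i j] that by (cases "i = j") auto
  have ccwf: "ccw_angle (x i) (x j) = (if i \<le> j then x j - x i else x j - x i + 2*pi)"
    if "i \<in> {1..n}" "j \<in> {1..n}" for i j
  proof (cases "i \<le> j")
    case True
    have "x 1 \<le> x i" "x j \<le> x n" using le that True by auto
    thus ?thesis using True le[of i j] that ccw_wrap by (simp add: ccw_pos)
  next
    case False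
    have "x 1 \<le> x j" "x i \<le> x n" "x j < x i" using le that False mono_x2[OF ccw_order, of j i] by auto
    thus ?thesis using False that ccw_wrap by (simp add: ccw_neg)
  qed
  have distinct: "x i \<noteq> x j" if "i \<in> {1..n}" "j \<in> {1..n}" "i \<noteq> j" for i j
    using mono_x2[OF ccw_order, of i j] mono_x2[OF ccw_order, of j i] that
    by (cases "i < j") auto
  define sc where "sc j = (if j < n then j + 1 else 1)" for j :: nat
  have sc_mod: "j mod n + 1 = sc j" if "j \<in> {1..n}" for j
    using that by (auto simp: sc_def)
  have sc_in: "sc j \<in> {1..n}" if "j \<in> {1..n}" for j using that n2 by (auto simp: sc_def)
  define g where "g j = ccw_angle (x j) (x (sc j))" for j
  have gpos: "0 < g j" if "j \<in> {1..n}" for j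
    using ccwf[OF that sc_in[OF that]] n2 that ccw_wrap mono_x2[OF ccw_order, of j "j+1"]
    by (auto simp: g_def sc_def)
  have gform: "g j = (if j < n then x (j+1) - x j else x 1 - x n + 2*pi)" if "j \<in> {1..n}" for j
    using ccwf[OF that sc_in[OF that]] n2 that by (auto simp: g_def sc_def)
  obtain m where m: "m \<in> {1..n}" "\<forall>j\<in>{1..n}. g m \<le> g j"
  proof -
    have "finite (g ` {1..n})" "g ` {1..n} \<noteq> {}" using n2 by auto
    then obtain v where "v \<in> g ` {1..n}" "v = Min (g ` {1..n})" using Min_in by blast
    then obtain m where "m \<in> {1..n}" "g m = Min (g ` {1..n})" by auto
    thus ?thesis using that by auto
  qed
  define m' where "m' = sc m"
  have m'in: "m' \<in> {1..n}" using sc_in[OF m(1)] m'_def by simp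
  define D where "D j = ccw_angle (x m) (x j)" for j
  define C where "C j = ccw_angle (x m') (x (sc j))" for j
  have key: "C j = D j + g j - g m" if j: "j \<in> {1..n}" "j \<noteq> m" for j
  proof -
    have A: "C j = (if m' \<le> sc j then x (sc j) - x m' else x (sc j) - x m' + 2*pi)"
      unfolding C_def by (rule ccwf[OF m'in sc_in[OF j(1)]])
    have B: "D j = (if m \<le> j then x j - x m else x j - x m + 2*pi)"
      unfolding D_def by (rule ccwf[OF m(1) j(1)])
    note G = gform[OF j(1)] gform[OF m(1)]
    consider "m < n" "j < n" | "m < n" "j = n" | "m = n" "j < n" using j m(1) by force
    thus ?thesis
    proof cases
      case 1
      hence "sc j = j + 1" "m' = m + 1" by (auto simp: sc_def m'_def)
      thus ?thesis using A B G 1 j by (cases "j < m") auto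
    next
      case 2
      hence "sc j = 1" "m' = m + 1" by (auto simp: sc_def m'_def)
      thus ?thesis using A B G 2 j m(1) by auto
    next
      case 3
      hence "sc j = j + 1" "m' = 1" by (auto simp: sc_def m'_def)
      thus ?thesis using A B G 3 j m(1) by auto
    qed
  qed
  have Drange: "0 < D j \<and> D j < 2*pi" if j: "j \<in> {1..n}" "j \<noteq> m" for j
  proof -
    have "x m \<noteq> x j" using distinct j m(1) by auto
    thus ?thesis using ccwf[OF m(1) j(1)] le[of m j] le[of j m] j m(1) ccw_wrap le[of 1 j] le[of 1 m] le[of j n] le[of m n]
      unfolding D_def by (auto split: if_splits)
  qed
  have Crange: "0 < C j \<and> C j < 2*pi" if j: "j \<in> {1..n}" "j \<noteq> m" for j
  proof -
    have "sc j \<noteq> m'" using j m(1) n2 unfolding m'_def sc_def by (auto split: if_splits)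
    hence "x m' \<noteq> x (sc j)" using distinct sc_in j m'in by auto
    thus ?thesis using ccwf[OF m'in sc_in[OF j(1)]] le[of m' "sc j"] le[of "sc j" m'] sc_in[OF j(1)] m'in ccw_wrap
        le[of 1 "sc j"] le[of 1 m'] le[of "sc j" n] le[of m' n]
      unfolding C_def by (auto split: if_splits)
  qed
  have sumD: "(\<Sum>j\<in>{1..n} - {m}. phiF F (D j)) = 0"
  proof -
    have "(\<Sum>j\<in>{1..n} - {m}. phiF F (D j)) = (\<Sum>j\<in>{1..n} - {m}. tforce F (x m) (x j))"
      by (rule sum.cong) (use Drange in \<open>auto simp: D_def intro!: tforce_phi[symmetric]\<close>)
    thus ?thesis using equil m(1) by (simp add: in_equilibrium_def)
  qed
  have sumC: "(\<Sum>j\<in>{1..n} - {m}. phiF F (C j)) = 0"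
  proof -
    define pr where "pr k = (if k = 1 then n else k - 1)" for k :: nat
    have "(\<Sum>j\<in>{1..n} - {m}. phiF F (C j)) = (\<Sum>k\<in>{1..n} - {m'}. tforce F (x m') (x k))"
    proof (rule sum.reindex_bij_witness[where i = pr and j = sc])
      fix a assume "a \<in> {1..n} - {m}" thus "pr (sc a) = a" by (auto simp: pr_def sc_def)
    next
      fix a assume "a \<in> {1..n} - {m}" thus "sc a \<in> {1..n} - {m'}"
        using m(1) n2 by (auto simp: sc_def m'_def split: if_splits)
    next
      fix b assume "b \<in> {1..n} - {m'}" thus "sc (pr b) = b" using n2 by (auto simp: pr_def sc_def)
    next
      fix b assume "b \<in> {1..n} - {m'}" thus "pr b \<in> {1..n} - {m}"
        using m(1) n2 by (auto simp: pr_def sc_def m'_def split: if_splits)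
    next
      fix a assume a: "a \<in> {1..n} - {m}"
      thus "tforce F (x m') (x (sc a)) = phiF F (C a)"
        using Crange[of a] tforce_phi unfolding C_def by auto
    qed
    thus ?thesis using equil m'in by (simp add: in_equilibrium_def)
  qed
  have ge: "phiF F (D j) \<le> phiF F (C j)" if j: "j \<in> {1..n} - {m}" for j
  proof (cases "g j = g m")
    case True thus ?thesis using key[of j] j by simp
  next
    case False
    hence "g m < g j" using m(2) j by force
    thus ?thesis using phi_mono[OF F_pos F_decr, of "D j" "C j"] key[of j] j Drange[of j] Crange[of j] by auto
  qed
  have zero: "(\<Sum>j\<in>{1..n} - {m}. phiF F (C j) - phiF F (D j)) = 0"
    using sumC sumD by (simp add: sum_subtractf)
  have eq: "phiF F (C j) - phiF F (D j) = 0" if "j \<in> {1..n} - {m}" for j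
    using sum_nonneg_eq_0_iff[of "{1..n} - {m}" "\<lambda>j. phiF F (C j) - phiF F (D j)"] zero ge that by auto
  have gall: "g j = g m" if j: "j \<in> {1..n}" for j
  proof (rule ccontr)
    assume ne: "g j \<noteq> g m"
    hence jm: "j \<noteq> m" by auto
    have "g m < g j" using ne m(2) j by force
    hence "phiF F (D j) < phiF F (C j)"
      using phi_mono[OF F_pos F_decr, of "D j" "C j"] key[OF j jm] Drange[OF j jm] Crange[OF j jm] by auto
    thus False using eq[of j] j jm by auto
  qed
  show ?thesis
  proof (intro ballI)
    fix i k assume i: "i \<in> {1..n}" and k: "k \<in> {1..n}"
    show "arc_dist (x i) (x (i mod n + 1)) = arc_dist (x k) (x (k mod n + 1))"
      using gall[OF i] gall[OF k] sc_mod[OF i] sc_mod[OF k] unfolding arc_dist_def g_def by simp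
  qed
qed

end
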